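(* Let $X$ be a Polish space and $n\in\mathbb{N}$. The map $\tau\mapsto\tau^*$ from $\mathcal{M}(X^{(n)})$ to $\mathcal{M}(X)$ is continuous.
   Context: $X^{(n)}$ is the quotient of $X^n$ by permutations of coordinates with the quotient topology, identified with the set of multisets $m:X\to\mathbb{N}$ of cardinality $n$. $\mathcal{M}(Z)$ denotes the finite Borel measures on $Z$ with the weak topology (generated by $\tau\mapsto\int f\,d\tau$ for bounded continuous $f$). For $\tau\in\mathcal{M}(X^{(n)})$, $\tau^*$ is the Borel measure on $X$ defined by $\tau^*(E)=\sum_{i=1}^n\tau\big(s^{-1}(\pi_i^{-1}(E))\big)$, where $s:X^{(n)}\to X^n$ is a universally measurable map with $q\circ s=\mathrm{id}$ ($q$ the quotient map) and $\pi_i:X^n\to X$ the $i$-th projection; equivalently $\tau^*(E)=\int\sum_{x\in E}m(x)\,d\tau(m)$. *)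

theory Defs
  imports "HOL-Analysis.Analysis" "HOL-Library.Multiset"
begin

definition borel_of :: "'a topology \<Rightarrow> 'a measure" where
  "borel_of T = sigma (topspace T) {U. openin T U}"

definition mset_of_tuple :: "nat \<Rightarrow> (nat \<Rightarrow> 'a) \<Rightarrow> 'a multiset" where
  "mset_of_tuple n x = mset (map x [0..<n])"

text \<open>The symmetric power X^(n): the multisets of cardinality n, carrying the
  quotient topology of the product topology on X^n under mset_of_tuple.\<close>
definition sym_power_topology :: "'a topology \<Rightarrow> nat \<Rightarrow> 'a multiset topology" where
  "sym_power_topology X n = topology (\<lambda>U.
     U \<subseteq> mset_of_tuple n ` topspace (product_topology (\<lambda>_. X) {..<n}) \<and>
     openin (product_topology (\<lambda>_. X) {..<n})
       {x \<in> topspace (product_topology (\<lambda>_. X) {..<n}). mset_of_tuple n x \<in> U})"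

definition finite_borel_measures :: "'a topology \<Rightarrow> 'a measure set" where
  "finite_borel_measures T =
     {M. finite_measure M \<and> space M = topspace T \<and> sets M = sets (borel_of T)}"

definition weak_measure_topology :: "'a topology \<Rightarrow> 'a measure topology" where
  "weak_measure_topology T = topology_generated_by
     {{M \<in> finite_borel_measures T. integral\<^sup>L M f \<in> U} | f U.
        continuous_map T euclideanreal f \<and> bounded (f ` topspace T) \<and> open U}"

definition intensity_measure :: "'a multiset measure \<Rightarrow> ('a::topological_space) measure" where
  "intensity_measure \<tau> = measure_of (topspace (euclidean::'a topology))
     (sets (borel_of (euclidean::'a topology)))
     (\<lambda>E. \<integral>\<^sup>+ m. ennreal (real (size (filter_mset (\<lambda>x. x \<in> E) m))) \<partial>\<tau>)"

end

theory Submission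
  imports Defs "HOL-Probability.Probability"
begin


abbreviation PT :: "nat \<Rightarrow> (nat \<Rightarrow> 'a::topological_space) topology" where
  "PT n \<equiv> product_topology (\<lambda>_. euclidean) {..<n}"

definition symP :: "nat \<Rightarrow> 'a::topological_space multiset set \<Rightarrow> bool" where
  "symP n U \<longleftrightarrow> U \<subseteq> mset_of_tuple n ` topspace (PT n) \<and>
     openin (PT n) {x \<in> topspace (PT n). mset_of_tuple n x \<in> U}"

lemma istopology_symP: "istopology (symP n)"
  unfolding istopology_def symP_def
proof (intro conjI allI impI ballI)
  fix S T :: "'a multiset set"
  assume a: "S \<subseteq> mset_of_tuple n ` topspace (PT n) \<and> openin (PT n) {x \<in> topspace (PT n). mset_of_tuple n x \<in> S}"
     and b: "T \<subseteq> mset_of_tuple n ` topspace (PT n) \<and> openin (PT n) {x \<in> topspace (PT n). mset_of_tuple n x \<in> T}"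
  show "S \<inter> T \<subseteq> mset_of_tuple n ` topspace (PT n)" using a by blast
  have e: "{x \<in> topspace (PT n). mset_of_tuple n x \<in> S \<inter> T} = {x \<in> topspace (PT n). mset_of_tuple n x \<in> S} \<inter> {x \<in> topspace (PT n). mset_of_tuple n x \<in> T}" by blast
  show "openin (PT n) {x \<in> topspace (PT n). mset_of_tuple n x \<in> S \<inter> T}"
    unfolding e by (rule openin_Int) (use a b in auto)
next
  fix K :: "'a multiset set set"
  assume a: "\<forall>S\<in>K. S \<subseteq> mset_of_tuple n ` topspace (PT n) \<and> openin (PT n) {x \<in> topspace (PT n). mset_of_tuple n x \<in> S}"
  show "\<Union>K \<subseteq> mset_of_tuple n ` topspace (PT n)" using a by blast
  have e: "{x \<in> topspace (PT n). mset_of_tuple n x \<in> \<Union>K} = (\<Union>S\<in>K. {x \<in> topspace (PT n). mset_of_tuple n x \<in> S})" by blast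
  show "openin (PT n) {x \<in> topspace (PT n). mset_of_tuple n x \<in> \<Union>K}"
    unfolding e by (rule openin_Union) (use a in auto)
qed

lemma sym_eq: "sym_power_topology (euclidean::'a::topological_space topology) n = topology (symP n)"
  unfolding sym_power_topology_def symP_def[abs_def] by (rule refl)

lemma openin_sym: "openin (sym_power_topology (euclidean::'a::topological_space topology) n) U \<longleftrightarrow> symP n U"
  by (simp only: sym_eq topology_inverse'[OF istopology_symP])

lemma image_mset_of_tuple:
  "mset_of_tuple n ` topspace (PT n :: (nat \<Rightarrow> 'a::topological_space) topology) = {m. size m = n}"
proof (intro equalityI subsetI)
  fix m assume "m \<in> mset_of_tuple n ` topspace (PT n :: (nat \<Rightarrow> 'a) topology)"
  then obtain x where "m = mset_of_tuple n x" by blast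
  then show "m \<in> {m. size m = n}" by (simp add: mset_of_tuple_def)
next
  fix m :: "'a multiset" assume "m \<in> {m. size m = n}"
  then have sz: "size m = n" by simp
  obtain xs where xs: "mset xs = m" using ex_mset by blast
  have len: "length xs = n" using xs sz by auto
  define x where "x = restrict (\<lambda>i. xs ! i) {..<n}"
  have "x \<in> topspace (PT n)" unfolding x_def by simp
  moreover have "map x [0..<n] = xs"
  proof -
    have "map x [0..<n] = map (nth xs) [0..<n]" by (rule map_cong) (auto simp: x_def)
    moreover have "map (nth xs) [0..<n] = xs" by (metis len map_nth)
    ultimately show ?thesis by simp
  qed
  ultimately show "m \<in> mset_of_tuple n ` topspace (PT n)"
    using xs by (metis image_eqI mset_of_tuple_def)
qed

lemma topspace_sym: "topspace (sym_power_topology (euclidean::'a::topological_space topology) n) = {m. size m = n}"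
proof -
  have "{x \<in> topspace (PT n :: (nat \<Rightarrow> 'a) topology). mset_of_tuple n x \<in> mset_of_tuple n ` topspace (PT n :: (nat \<Rightarrow> 'a) topology)} = topspace (PT n)"
    by blast
  then have "symP n (mset_of_tuple n ` topspace (PT n :: (nat \<Rightarrow> 'a) topology))"
    unfolding symP_def by (metis openin_topspace order_refl)
  then have "mset_of_tuple n ` topspace (PT n :: (nat \<Rightarrow> 'a) topology) \<subseteq> topspace (sym_power_topology (euclidean::'a::topological_space topology) n)"
    by (simp add: openin_subset openin_sym)
  moreover have "topspace (sym_power_topology (euclidean::'a::topological_space topology) n) \<subseteq> mset_of_tuple n ` topspace (PT n :: (nat \<Rightarrow> 'a) topology)"
    unfolding topspace_def openin_sym symP_def by blast
  ultimately show ?thesis using image_mset_of_tuple by blast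
qed

lemma continuous_map_symI:
  assumes "continuous_map (PT n) euclideanreal (g \<circ> mset_of_tuple n)"
  shows "continuous_map (sym_power_topology (euclidean::'a::topological_space topology) n) euclideanreal g"
  unfolding continuous_map_def
proof (intro conjI allI impI ballI)
  fix U :: "real set" assume U: "openin euclideanreal U"
  have e: "{x \<in> topspace (PT n). mset_of_tuple n x \<in> {m \<in> topspace (sym_power_topology euclidean n). g m \<in> U}}
        = {x \<in> topspace (PT n :: (nat \<Rightarrow> 'a) topology). (g \<circ> mset_of_tuple n) x \<in> U}"
    using image_mset_of_tuple[where 'a='a] topspace_sym[where 'a='a] by auto
  show "openin (sym_power_topology euclidean n) {m \<in> topspace (sym_power_topology euclidean n). g m \<in> U}"
    unfolding openin_sym symP_def e
    using assms U image_mset_of_tuple[where 'a='a] topspace_sym[where 'a='a]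
    by (auto simp: continuous_map_def)
qed auto

lemma size_filter_tuple:
  "size (filter_mset P (mset_of_tuple n x)) = card {i. i < n \<and> P (x i)}"
proof -
  have "filter_mset P (mset_of_tuple n x) = mset (filter P (map x [0..<n]))"
    unfolding mset_of_tuple_def by (rule mset_filter[symmetric])
  then have "size (filter_mset P (mset_of_tuple n x)) = length (filter P (map x [0..<n]))"
    by (simp only: size_mset)
  also have "\<dots> = card {i. i < length (map x [0..<n]) \<and> P (map x [0..<n] ! i)}"
    by (rule length_filter_conv_card)
  also have "\<dots> = card {i. i < n \<and> P (x i)}"
    by (rule arg_cong[where f=card]) auto
  finally show ?thesis .
qed

lemma lsc_count:
  fixes E :: "'a::topological_space set"
  assumes E: "open E"
  shows "openin (sym_power_topology (euclidean::'a topology) n)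
          {m \<in> topspace (sym_power_topology euclidean n). a < real (size (filter_mset (\<lambda>x. x \<in> E) m))}"
  unfolding openin_sym symP_def
proof (intro conjI)
  show "{m \<in> topspace (sym_power_topology euclidean n). a < real (size (filter_mset (\<lambda>x. x \<in> E) m))}
        \<subseteq> mset_of_tuple n ` topspace (PT n)"
    using image_mset_of_tuple[where 'a='a] topspace_sym[where 'a='a] by auto
  have e: "{x \<in> topspace (PT n). mset_of_tuple n x \<in> {m \<in> topspace (sym_power_topology euclidean n). a < real (size (filter_mset (\<lambda>x. x \<in> E) m))}}
      = {x \<in> topspace (PT n :: (nat \<Rightarrow> 'a) topology). a < real (card {i. i < n \<and> x i \<in> E})}"
    using image_mset_of_tuple[where 'a='a] topspace_sym[where 'a='a] by (auto simp: size_filter_tuple)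
  show "openin (PT n) {x \<in> topspace (PT n). mset_of_tuple n x \<in> {m \<in> topspace (sym_power_topology euclidean n). a < real (size (filter_mset (\<lambda>x. x \<in> E) m))}}"
    unfolding e
  proof (subst openin_subopen, intro ballI)
    fix x assume x: "x \<in> {x \<in> topspace (PT n :: (nat \<Rightarrow> 'a) topology). a < real (card {i. i < n \<and> x i \<in> E})}"
    define T where "T = PiE {..<n} (\<lambda>i. if x i \<in> E then E else (UNIV::'a set))"
    have "openin (PT n) T" unfolding T_def using E by (subst openin_PiE) auto
    moreover have "x \<in> T" using x unfolding T_def by (auto simp: PiE_iff)
    moreover have "T \<subseteq> {x \<in> topspace (PT n :: (nat \<Rightarrow> 'a) topology). a < real (card {i. i < n \<and> x i \<in> E})}"
    proof
      fix y assume y: "y \<in> T"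
      from y have yy: "\<forall>i<n. y i \<in> (if x i \<in> E then E else UNIV)" by (simp add: T_def PiE_iff)
      have "{i. i < n \<and> x i \<in> E} \<subseteq> {i. i < n \<and> y i \<in> E}"
      proof
        fix i assume "i \<in> {i. i < n \<and> x i \<in> E}"
        then show "i \<in> {i. i < n \<and> y i \<in> E}" using yy[rule_format, of i] by simp
      qed
      then have "card {i. i < n \<and> x i \<in> E} \<le> card {i. i < n \<and> y i \<in> E}"
        by (intro card_mono) auto
      then show "y \<in> {x \<in> topspace (PT n :: (nat \<Rightarrow> 'a) topology). a < real (card {i. i < n \<and> x i \<in> E})}"
        using x y unfolding T_def by (auto simp: PiE_iff)
    qed
    ultimately show "\<exists>T. openin (PT n) T \<and> x \<in> T \<and> T \<subseteq> {x \<in> topspace (PT n). a < real (card {i. i < n \<and> x i \<in> E})}"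
      by blast
  qed
qed




lemma space_borel_of: "space (borel_of T) = topspace T"
  unfolding borel_of_def by (rule space_measure_of) (auto dest: openin_subset)

lemma sets_borel_of: "sets (borel_of T) = sigma_sets (topspace T) {U. openin T U}"
  unfolding borel_of_def by (rule sets_measure_of) (auto dest: openin_subset)

lemma open_sets_borel_of: "openin T U \<Longrightarrow> U \<in> sets (borel_of T)"
  unfolding sets_borel_of by (rule sigma_sets.Basic) simp

lemma borel_of_euclidean: "borel_of (euclidean :: 'a::topological_space topology) = borel"
  unfolding borel_of_def borel_def by simp

lemma cont_meas:
  assumes "continuous_map T euclideanreal g"
  shows "g \<in> borel_measurable (borel_of T)"
proof (rule borel_measurableI)
  fix S :: "real set" assume "open S"
  then have "openin T {x \<in> topspace T. g x \<in> S}" using assms by (simp add: continuous_map_def)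
  moreover have "{x \<in> topspace T. g x \<in> S} = g -` S \<inter> space (borel_of T)"
    by (auto simp: space_borel_of)
  ultimately show "g -` S \<inter> space (borel_of T) \<in> sets (borel_of T)"
    using open_sets_borel_of by metis
qed

lemma cnt_meas:
  fixes E :: "'a::topological_space set"
  assumes "open E"
  shows "(\<lambda>m. real (size (filter_mset (\<lambda>x. x \<in> E) m))) \<in> borel_measurable (borel_of (sym_power_topology (euclidean::'a topology) n))"
proof (rule borel_measurableI_greater)
  fix y :: real
  show "{x \<in> space (borel_of (sym_power_topology euclidean n)). y < real (size (filter_mset (\<lambda>x. x \<in> E) x))}
       \<in> sets (borel_of (sym_power_topology (euclidean::'a topology) n))"
    unfolding space_borel_of by (rule open_sets_borel_of) (rule lsc_count[OF assms])
qed

lemma sum_mset_count_real: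
  fixes f :: "'a \<Rightarrow> real"
  assumes "finite A" "set_mset M \<subseteq> A"
  shows "sum_mset (image_mset f M) = (\<Sum>y\<in>A. real (count M y) * f y)"
  using assms(2)
proof (induction M)
  case empty
  then show ?case by simp
next
  case (add x M)
  then have xA: "x \<in> A" and MA: "set_mset M \<subseteq> A" by auto
  have "(\<Sum>y\<in>A. real (count (add_mset x M) y) * f y)
        = (\<Sum>y\<in>A. real (count M y) * f y + (if y = x then f y else 0))"
    by (rule sum.cong) (auto simp: algebra_simps)
  also have "\<dots> = (\<Sum>y\<in>A. real (count M y) * f y) + f x"
    using xA assms(1) by (simp add: sum.distrib)
  finally show ?case using add.IH[OF MA] by simp
qed

lemma size_filter_sum_mset:
  "real (size (filter_mset P M)) = sum_mset (image_mset (\<lambda>x. if P x then 1 else 0) M)"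
  by (induction M) auto

definition K :: "'a::topological_space multiset \<Rightarrow> 'a measure" where
  "K m = distr (measure_pmf (pmf_of_multiset m)) borel id"

lemma id_meas_pmf: "id \<in> measurable (measure_pmf p) borel"
  by (simp add: measurable_def)

lemma prob_K: "prob_space (K m)"
  unfolding K_def by (rule measure_pmf.prob_space_distr[OF id_meas_pmf])

lemma sets_K[simp]: "sets (K m) = sets borel"
  by (simp add: K_def)

lemma space_K[simp]: "space (K m) = UNIV"
  by (simp add: K_def)

lemma int_K:
  fixes g :: "'a::topological_space \<Rightarrow> real"
  assumes g: "g \<in> borel_measurable borel" and m: "m \<noteq> {#}"
  shows "integral\<^sup>L (K m) g = sum_mset (image_mset g m) / real (size m)"
proof -
  have "integral\<^sup>L (K m) g = integral\<^sup>L (measure_pmf (pmf_of_multiset m)) g"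
    unfolding K_def by (simp add: integral_distr[OF id_meas_pmf g])
  also have "\<dots> = (\<Sum>a\<in>set_mset m. g a * pmf (pmf_of_multiset m) a)"
    by (rule integral_measure_pmf_real) (use m in auto)
  also have "\<dots> = (\<Sum>a\<in>set_mset m. real (count m a) * g a / real (size m))"
    using m by (intro sum.cong) auto
  also have "\<dots> = sum_mset (image_mset g m) / real (size m)"
    by (simp add: sum_divide_distrib[symmetric] sum_mset_count_real[of "set_mset m"])
  finally show ?thesis .
qed

lemma em_K:
  fixes E :: "'a::topological_space set"
  assumes m: "m \<noteq> {#}" and E: "E \<in> sets borel"
  shows "emeasure (K m) E = ennreal (real (size (filter_mset (\<lambda>x. x \<in> E) m)) / real (size m))"
proof -
  interpret prob_space "K m" by (rule prob_K)
  have "emeasure (K m) E = ennreal (measure (K m) E)" by (rule emeasure_eq_measure)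
  also have "measure (K m) E = integral\<^sup>L (K m) (indicator E)"
    using E by (simp add: integral_indicator emeasure_eq_measure)
  also have "\<dots> = sum_mset (image_mset (indicator E) m) / real (size m)"
    by (rule int_K) (use E m in auto)
  also have "sum_mset (image_mset (indicator E) m) = real (size (filter_mset (\<lambda>x. x \<in> E) m))"
  proof -
    have "indicator E = (\<lambda>x. if x \<in> E then 1 else (0::real))" by (auto simp: indicator_def fun_eq_iff)
    then show ?thesis by (simp add: size_filter_sum_mset)
  qed
  finally show ?thesis .
qed

lemma K_meas:
  "K \<in> measurable (borel_of (sym_power_topology (euclidean::'a::topological_space topology) n)) (subprob_algebra borel)"
proof (rule measurable_subprob_algebra_generated[where \<Omega>=UNIV and G="{S. open S}"])
  show "sets borel = sigma_sets UNIV {S :: 'a set. open S}" by (rule sets_borel)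
  show "Int_stable {S :: 'a set. open S}" by (auto simp: Int_stable_def)
  show "{S :: 'a set. open S} \<subseteq> Pow UNIV" by simp
  fix a show "subprob_space (K a)" by (rule prob_space_imp_subprob_space[OF prob_K])
  show "sets (K a) = sets borel" by simp
next
  fix A :: "'a set" assume "A \<in> {S. open S}"
  then have A: "open A" by simp
  show "(\<lambda>a. emeasure (K a) A) \<in> borel_measurable (borel_of (sym_power_topology euclidean n))"
  proof (cases "n = 0")
    case True
    then have "\<And>a. a \<in> space (borel_of (sym_power_topology (euclidean::'a topology) n)) \<Longrightarrow> emeasure (K a) A = emeasure (K {#}) A"
      by (simp add: space_borel_of topspace_sym)
    then show ?thesis by (subst measurable_cong) auto
  next
    case False
    have "\<And>a. a \<in> space (borel_of (sym_power_topology (euclidean::'a topology) n)) \<Longrightarrow>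
        emeasure (K a) A = ennreal (real (size (filter_mset (\<lambda>x. x \<in> A) a)) / real n)"
      using False A by (auto simp: space_borel_of topspace_sym) (subst em_K, auto)
    moreover have c[measurable]: "(\<lambda>m. real (size (filter_mset (\<lambda>x. x \<in> A) m))) \<in> borel_measurable (borel_of (sym_power_topology (euclidean::'a topology) n))"
      by (rule cnt_meas[OF A])
    ultimately show ?thesis by (subst measurable_cong) (auto, measurable)
  qed
next
  have "\<And>a::'a multiset. emeasure (K a) UNIV = 1"
    using prob_space.emeasure_space_1[OF prob_K] by simp
  then show "(\<lambda>a. emeasure (K a) UNIV) \<in> borel_measurable (borel_of (sym_power_topology (euclidean::'a topology) n))"
    by simp
qed




lemma scale_density: "scale_measure (ennreal r) M = density M (\<lambda>_. ennreal r)"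
  by (rule measure_eqI) (auto simp: emeasure_density_const)

locale fbm_ctx =
  fixes n :: nat and \<tau> :: "'a::topological_space multiset measure"
  assumes fbm: "\<tau> \<in> finite_borel_measures (sym_power_topology (euclidean::'a topology) n)"
begin

lemma fin: "finite_measure \<tau>" and space_tau: "space \<tau> = {m. size m = n}"
  and sets_tau: "sets \<tau> = sets (borel_of (sym_power_topology (euclidean::'a topology) n))"
  using fbm by (auto simp: finite_borel_measures_def topspace_sym)

abbreviation "\<tau>n \<equiv> scale_measure (ennreal (real n)) \<tau>"
abbreviation "B \<equiv> bind \<tau>n K"

lemma ne: "space \<tau>n \<noteq> {}"
proof -
  have "replicate_mset n undefined \<in> space \<tau>n" by (simp add: space_scale_measure space_tau)
  then show ?thesis by blast
qed

lemma K0: "K \<in> measurable \<tau> (subprob_algebra borel)"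
  using K_meas[where 'a='a and n=n] by (subst measurable_cong_sets[OF sets_tau refl])

lemma Kn: "K \<in> measurable \<tau>n (subprob_algebra borel)"
  using K0 by (subst measurable_cong_sets[OF sets_scale_measure refl])

lemma sets_B: "sets B = sets borel" by (rule sets_bind_measurable[OF Kn ne])
lemma space_B: "space B = UNIV" using space_bind_measurable[OF Kn ne] by simp

lemma emeasure_B:
  assumes E: "E \<in> sets borel"
  shows "emeasure B E = (\<integral>\<^sup>+ m. ennreal (real (size (filter_mset (\<lambda>x. x \<in> E) m))) \<partial>\<tau>)"
proof -
  have m0: "(\<lambda>x. emeasure (K x) E) \<in> borel_measurable \<tau>"
    by (rule measurable_emeasure_kernel[OF K0 E])
  have "emeasure B E = (\<integral>\<^sup>+ x. emeasure (K x) E \<partial>\<tau>n)"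
    by (rule emeasure_bind[OF ne Kn E])
  also have "\<dots> = ennreal (real n) * (\<integral>\<^sup>+ x. emeasure (K x) E \<partial>\<tau>)"
    by (rule nn_integral_scale_measure[OF m0])
  also have "\<dots> = (\<integral>\<^sup>+ x. ennreal (real n) * emeasure (K x) E \<partial>\<tau>)"
    by (rule nn_integral_cmult[symmetric, OF m0])
  also have "\<dots> = (\<integral>\<^sup>+ m. ennreal (real (size (filter_mset (\<lambda>x. x \<in> E) m))) \<partial>\<tau>)"
  proof (rule nn_integral_cong)
    fix m assume "m \<in> space \<tau>"
    then have sz: "size m = n" by (simp add: space_tau)
    show "ennreal (real n) * emeasure (K m) E = ennreal (real (size (filter_mset (\<lambda>x. x \<in> E) m)))"
    proof (cases "n = 0")
      case True
      then have "m = {#}" using sz by simp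
      then show ?thesis using True by simp
    next
      case False
      then have "m \<noteq> {#}" using sz by auto
      then have "emeasure (K m) E = ennreal (real (size (filter_mset (\<lambda>x. x \<in> E) m)) / real n)"
        using em_K[OF _ E] sz by simp
      then show ?thesis using False
        by (simp add: ennreal_mult[symmetric])
    qed
  qed
  finally show ?thesis .
qed

lemma intensity_eq: "intensity_measure \<tau> = B"
proof -
  have "intensity_measure \<tau> = measure_of UNIV (sets borel)
          (\<lambda>E. \<integral>\<^sup>+ m. ennreal (real (size (filter_mset (\<lambda>x. x \<in> E) m))) \<partial>\<tau>)"
    unfolding intensity_measure_def borel_of_euclidean by simp
  also have "\<dots> = measure_of UNIV (sets borel) (emeasure B)"
  proof (rule measure_of_eq)
    fix a assume "a \<in> sigma_sets UNIV (sets (borel::'a measure))"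
    then have "a \<in> sets borel" using sets.sigma_sets_eq[of "borel::'a measure"] by simp
    then show "(\<integral>\<^sup>+ m. ennreal (real (size (filter_mset (\<lambda>x. x \<in> a) m))) \<partial>\<tau>) = emeasure B a"
      by (simp add: emeasure_B)
  qed simp
  also have "\<dots> = measure_of (space B) (sets B) (emeasure B)"
    by (simp add: space_B sets_B)
  also have "\<dots> = B" by (rule measure_of_of_measure)
  finally show ?thesis .
qed

lemma fin_tau_n: "finite_measure \<tau>n"
proof
  have "emeasure \<tau> (space \<tau>) \<noteq> \<infinity>" using finite_measure.emeasure_finite[OF fin] by simp
  then show "emeasure \<tau>n (space \<tau>n) \<noteq> \<infinity>"
    by (simp add: space_scale_measure ennreal_mult_eq_top_iff)
qed

lemma fin_B: "finite_measure B"
proof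
  have "emeasure B (space B) = (\<integral>\<^sup>+ m. ennreal (real (size (filter_mset (\<lambda>x. x \<in> UNIV) m))) \<partial>\<tau>)"
    unfolding space_B by (rule emeasure_B) simp
  also have "\<dots> = (\<integral>\<^sup>+ m. ennreal (real n) \<partial>\<tau>)"
    by (rule nn_integral_cong) (simp add: space_tau)
  also have "\<dots> = ennreal (real n) * emeasure \<tau> (space \<tau>)" by simp
  finally show "emeasure B (space B) \<noteq> \<infinity>"
    using finite_measure.emeasure_finite[OF fin] by (simp add: ennreal_mult_eq_top_iff)
qed

lemma intensity_fbm: "intensity_measure \<tau> \<in> finite_borel_measures (euclidean :: 'a topology)"
  unfolding intensity_eq finite_borel_measures_def
  using fin_B space_B sets_B by (simp add: borel_of_euclidean)

lemma integral_B:
  fixes f :: "'a \<Rightarrow> real"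
  assumes fm: "f \<in> borel_measurable borel" and bd: "\<And>x. \<bar>f x\<bar> \<le> Bd"
  shows "integral\<^sup>L (intensity_measure \<tau>) f = integral\<^sup>L \<tau> (\<lambda>m. sum_mset (image_mset f m))"
proof -
  have "integral\<^sup>L B f = integral\<^sup>L (join (distr \<tau>n (subprob_algebra borel) K)) f"
    by (simp add: bind_nonempty''[OF Kn ne])
  also have "\<dots> = (\<integral>M'. integral\<^sup>L M' f \<partial>(distr \<tau>n (subprob_algebra borel) K))"
  proof (rule integral_join[where B=Bd and B'=1])
    show "f \<in> borel_measurable borel" by (rule fm)
    show "\<And>x. x \<in> space borel \<Longrightarrow> \<bar>f x\<bar> \<le> Bd" using bd by simp
    show "sets (distr \<tau>n (subprob_algebra borel) K) = sets (subprob_algebra borel)" by simp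
    show "finite_measure (distr \<tau>n (subprob_algebra borel) K)"
      by (rule finite_measure.finite_measure_distr[OF fin_tau_n Kn])
    show "AE M' in distr \<tau>n (subprob_algebra borel) K. emeasure M' (space M') \<le> ennreal 1"
      by (rule AE_I2) (auto simp: space_subprob_algebra subprob_space.emeasure_space_le_1)
  qed
  also have "\<dots> = (\<integral>x. integral\<^sup>L (K x) f \<partial>\<tau>n)"
    by (rule integral_distr[OF Kn integral_measurable_subprob_algebra[OF fm]])
  also have "\<dots> = (\<integral>x. real n *\<^sub>R integral\<^sup>L (K x) f \<partial>\<tau>)"
    unfolding scale_density
  proof (rule integral_density)
    show "(\<lambda>x. integral\<^sup>L (K x) f) \<in> borel_measurable \<tau>"
      by (rule measurable_compose[OF K0 integral_measurable_subprob_algebra[OF fm]])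
  qed auto
  also have "\<dots> = integral\<^sup>L \<tau> (\<lambda>m. sum_mset (image_mset f m))"
  proof (rule Bochner_Integration.integral_cong[OF refl])
    fix m assume "m \<in> space \<tau>"
    then have sz: "size m = n" by (simp add: space_tau)
    show "real n *\<^sub>R integral\<^sup>L (K m) f = sum_mset (image_mset f m)"
    proof (cases "n = 0")
      case True
      then have "m = {#}" using sz by simp
      then show ?thesis using True by simp
    next
      case False
      then have "m \<noteq> {#}" using sz by auto
      then show ?thesis using int_K[OF fm] sz False by simp
    qed
  qed
  finally show ?thesis unfolding intensity_eq .
qed

end




abbreviation SubW :: "'a topology \<Rightarrow> 'a measure set set" where
  "SubW T \<equiv> {{M \<in> finite_borel_measures T. integral\<^sup>L M f \<in> U} | f U.
        continuous_map T euclideanreal f \<and> bounded (f ` topspace T) \<and> open U}"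

lemma SubW_Union: "\<Union>(SubW T) = finite_borel_measures T"
proof (intro equalityI subsetI)
  fix M assume "M \<in> \<Union>(SubW T)" then show "M \<in> finite_borel_measures T" by auto
next
  fix M assume M: "M \<in> finite_borel_measures T"
  have "bounded ((\<lambda>_. 0::real) ` topspace T)"
    by (rule bounded_subset[of "{0}"]) auto
  then have "{M \<in> finite_borel_measures T. integral\<^sup>L M (\<lambda>_. 0::real) \<in> UNIV} \<in> SubW T"
    by (intro CollectI exI[of _ "\<lambda>_. 0::real"] exI[of _ "UNIV::real set"]) auto
  then show "M \<in> \<Union>(SubW T)" using M by blast
qed

lemma weak_eq: "weak_measure_topology T = topology_generated_by (SubW T)"
  by (simp add: weak_measure_topology_def)

lemma topspace_weak: "topspace (weak_measure_topology T) = finite_borel_measures T"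
  unfolding weak_eq topology_generated_by_topspace by (rule SubW_Union)

lemma F_tuple: "sum_mset (image_mset f (mset_of_tuple n x)) = (\<Sum>i<n. (f (x i) :: real))"
proof -
  have "sum_mset (image_mset f (mset_of_tuple n x)) = sum_list (map f (map x [0..<n]))"
    unfolding mset_of_tuple_def by (simp only: mset_map[symmetric] sum_mset_sum_list)
  also have "\<dots> = sum_list (map (\<lambda>i. f (x i)) [0..<n])" by (simp add: o_def)
  also have "\<dots> = (\<Sum>i\<in>set [0..<n]. f (x i))" by (rule sum_set_upt_conv_sum_list_nat[symmetric])
  also have "\<dots> = (\<Sum>i<n. f (x i))" by (simp add: atLeast0LessThan)
  finally show ?thesis .
qed

lemma F_cont:
  assumes fc: "continuous_map (euclidean::'a::topological_space topology) euclideanreal f"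
  shows "continuous_map (sym_power_topology (euclidean::'a topology) n) euclideanreal (\<lambda>m. sum_mset (image_mset f m))"
proof (rule continuous_map_symI)
  have e: "((\<lambda>m. sum_mset (image_mset f m)) \<circ> mset_of_tuple n) = (\<lambda>x. \<Sum>i<n. f (x i))"
    by (simp add: fun_eq_iff F_tuple)
  show "continuous_map (PT n) euclideanreal ((\<lambda>m. sum_mset (image_mset f m)) \<circ> mset_of_tuple n)"
    unfolding e
  proof (rule continuous_map_sum)
    fix i assume "i \<in> {..<n}"
    then have "continuous_map (PT n) (euclidean::'a topology) (\<lambda>x. x i)"
      using continuous_map_product_projection[of i "{..<n}" "\<lambda>_. euclidean::'a topology"] by simp
    from continuous_map_compose[OF this fc]
    show "continuous_map (PT n) euclideanreal (\<lambda>x. f (x i))" by (simp add: o_def)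
  qed simp
qed

lemma F_bound:
  fixes f :: "'a \<Rightarrow> real"
  assumes "\<And>x. \<bar>f x\<bar> \<le> Bd"
  shows "\<bar>sum_mset (image_mset f m)\<bar> \<le> real (size m) * Bd"
proof (induction m)
  case empty then show ?case by simp
next
  case (add x m)
  have "\<bar>sum_mset (image_mset f (add_mset x m))\<bar> \<le> \<bar>f x\<bar> + \<bar>sum_mset (image_mset f m)\<bar>" by simp
  also have "\<dots> \<le> Bd + real (size m) * Bd" using assms[of x] add.IH by linarith
  finally show ?case by (simp add: algebra_simps)
qed

theorem lemma6:
  fixes n :: nat
  shows "continuous_map
           (weak_measure_topology (sym_power_topology (euclidean :: ('a::polish_space) topology) n))
           (weak_measure_topology (euclidean :: 'a topology))
           intensity_measure"
  unfolding weak_eq[of "euclidean :: 'a topology"] continuous_on_generated_topo_iff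
proof (intro conjI allI impI)
  fix V assume "V \<in> SubW (euclidean :: 'a topology)"
  then obtain f U where V: "V = {M \<in> finite_borel_measures (euclidean :: 'a topology). integral\<^sup>L M f \<in> U}"
    and fc: "continuous_map (euclidean :: 'a topology) euclideanreal f"
    and fb: "bounded (f ` topspace (euclidean :: 'a topology))" and U: "open U"
    by blast
  obtain Bd where Bd: "\<And>x. \<bar>f x\<bar> \<le> Bd" using fb unfolding bounded_iff by auto
  have fm: "f \<in> borel_measurable borel"
    using cont_meas[OF fc] by (simp add: borel_of_euclidean)
  define F where "F = (\<lambda>m. sum_mset (image_mset f m))"
  have "intensity_measure -` V \<inter> topspace (weak_measure_topology (sym_power_topology (euclidean :: 'a topology) n))
     = {\<tau> \<in> finite_borel_measures (sym_power_topology (euclidean :: 'a topology) n). integral\<^sup>L \<tau> F \<in> U}"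
    unfolding topspace_weak V F_def
  proof (rule set_eqI)
    fix \<tau> :: "'a multiset measure"
    show "\<tau> \<in> intensity_measure -` {M \<in> finite_borel_measures euclidean. integral\<^sup>L M f \<in> U} \<inter>
            finite_borel_measures (sym_power_topology euclidean n) \<longleftrightarrow>
          \<tau> \<in> {\<tau> \<in> finite_borel_measures (sym_power_topology euclidean n). integral\<^sup>L \<tau> (\<lambda>m. sum_mset (image_mset f m)) \<in> U}"
    proof (cases "\<tau> \<in> finite_borel_measures (sym_power_topology (euclidean :: 'a topology) n)")
      case True
      interpret fbm_ctx n \<tau> by unfold_locales (rule True)
      show ?thesis using True intensity_fbm integral_B[OF fm Bd] by simp
    qed simp
  qed
  moreover have "{\<tau> \<in> finite_borel_measures (sym_power_topology (euclidean :: 'a topology) n). integral\<^sup>L \<tau> F \<in> U}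
     \<in> SubW (sym_power_topology (euclidean :: 'a topology) n)"
  proof (intro CollectI exI conjI)
    show "continuous_map (sym_power_topology euclidean n) euclideanreal F"
      unfolding F_def by (rule F_cont[OF fc])
    show "bounded (F ` topspace (sym_power_topology (euclidean :: 'a topology) n))"
      unfolding bounded_iff
    proof (intro exI ballI)
      fix y assume "y \<in> F ` topspace (sym_power_topology (euclidean :: 'a topology) n)"
      then obtain m where "size m = n" "y = F m" by (auto simp: topspace_sym)
      then show "norm y \<le> real n * Bd" using F_bound[OF Bd, where m=m] by (simp add: F_def)
    qed
  qed (use U in auto)
  ultimately show "openin (weak_measure_topology (sym_power_topology euclidean n))
      (intensity_measure -` V \<inter> topspace (weak_measure_topology (sym_power_topology euclidean n)))"
    unfolding weak_eq[of "sym_power_topology (euclidean :: 'a topology) n"]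
    by (simp add: topology_generated_by_Basis)
next
  show "intensity_measure ` topspace (weak_measure_topology (sym_power_topology (euclidean :: 'a topology) n))
        \<subseteq> \<Union>(SubW (euclidean :: 'a topology))"
    unfolding SubW_Union topspace_weak
    using fbm_ctx.intensity_fbm unfolding fbm_ctx_def by blast
qed


end
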